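(* Consider the saddle-point problem $\min_{x_1\in\mathcal{X}_1}\max_{x_2\in\mathcal{X}_2} f(x_1,x_2)$ described in the context, and assume it is coherent. Assume $g$ is $L_g$-Lipschitz, i.e. $\|g(x)-g(x')\|_*\le L_g\|x-x'\|$ for all $x,x'\in\mathcal{X}$. Run the optimistic mirror descent algorithm with exact gradients, $$Y_n = P_{X_n}(-\gamma_n g(X_n)),\qquad X_{n+1} = P_{X_n}(-\gamma_n g(Y_n)),$$ with a step-size sequence $\{\gamma_n\}_n$ satisfying $$0<\lim_{n\to\infty}\gamma_n\le \sup_n \gamma_n < K/L_g.$$ Then $\lim_{n\to\infty} X_n = x^*$ for some $x^*\in\mathcal{X}^*$. Moreover, there exists a sufficiently large $n_0$ such that $D(x^*,X_n)$ decreases monotonically in $n$ for all $n\ge n_0$.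
   Context: Let $\mathcal{V}_i=\mathbb{R}^{d_i}$ ($i=1,2$) be finite-dimensional normed spaces, $\mathcal{X}_i\subset\mathcal{V}_i$ compact convex sets, $\mathcal{X}=\mathcal{X}_1\times\mathcal{X}_2\subset\mathcal{V}=\mathcal{V}_1\times\mathcal{V}_2$ with norm $\|\cdot\|$ and dual norm $\|\cdot\|_*$ on $\mathcal{V}^*$. Let $f:\mathcal{X}\to\mathbb{R}$ be continuously differentiable and $g(x)=(\nabla_{x_1}f(x_1,x_2),-\nabla_{x_2}f(x_1,x_2))\in\mathcal{V}^*$. Let $\mathcal{X}^*$ be the set of solutions (saddle points) of the problem (SP) $\min_{x_1}\max_{x_2} f$. A point $x^*$ solves (SVI) if $\langle g(x^* ),x-x^*\rangle\ge0$ for all $x\in\mathcal{X}$, and satisfies (MVI) if $\langle g(x),x-x^*\rangle\ge 0$ for all $x\in\mathcal{X}$. (SP) is coherent if: (1) every solution of (SVI) solves (SP); (2) there is a solution $p$ of (SP) satisfying (MVI); (3) for some fixed $\epsilon_0>0$, every solution $x^*$ of (SP) satisfies $\langle g(x),x-x^*\rangle\ge0$ for all $x\in\mathcal{X}$ with $D(x^*,x)\le\epsilon_0$. Fix a differentiable function $h$ whose domain contains $\mathcal{X}$, which is $K$-strongly convex in the sense $\langle\nabla h(x)-\nabla h(x'),x-x'\rangle\ge K\|x-x'\|^2$ for all $x,x'\in\mathcal{X}$, and whose gradient is $L_h$-Lipschitz ($\|\nabla h(x)-\nabla h(x')\|_*\le L_h\|x-x'\|$). The Bregman divergence is $D(p,x)=h(p)-h(x)-\langle\nabla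 h(x),p-x\rangle$, and it is assumed to satisfy the Bregman reciprocity condition: $D(p,x_n)\to0$ whenever $x_n\to p$. The prox-mapping is $P_x(y)=\arg\min_{x'\in\mathcal{X}}\{\langle y,x-x'\rangle+D(x',x)\}$ for $y\in\mathcal{V}^*$. *)

theory Defs
  imports "HOL-Analysis.Analysis"
begin

text \<open>V = V1 x V2 with V_i a Euclidean space; the dual space V* is identified with V
  through the inner product, so the pairing <y,x> is y \<bullet> x.\<close>

definition is_norm :: "('v::real_vector \<Rightarrow> real) \<Rightarrow> bool" where
  "is_norm N \<longleftrightarrow> (\<forall>x. 0 \<le> N x) \<and> (\<forall>x. N x = 0 \<longleftrightarrow> x = 0)
     \<and> (\<forall>c x. N (c *\<^sub>R x) = \<bar>c\<bar> * N x) \<and> (\<forall>x y. N (x + y) \<le> N x + N y)"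

definition dual_norm :: "('v::real_inner \<Rightarrow> real) \<Rightarrow> 'v \<Rightarrow> real" where
  "dual_norm N y = (SUP x\<in>{x. N x \<le> 1}. y \<bullet> x)"

definition bregman :: "('v::real_inner \<Rightarrow> real) \<Rightarrow> ('v \<Rightarrow> 'v) \<Rightarrow> 'v \<Rightarrow> 'v \<Rightarrow> real" where
  "bregman h dh p x = h p - h x - dh x \<bullet> (p - x)"

definition prox :: "'v::real_inner set \<Rightarrow> ('v \<Rightarrow> real) \<Rightarrow> ('v \<Rightarrow> 'v) \<Rightarrow> 'v \<Rightarrow> 'v \<Rightarrow> 'v" where
  "prox X h dh x y = (THE x'. is_arg_min (\<lambda>x'. y \<bullet> (x - x') + bregman h dh x' x) (\<lambda>x'. x' \<in> X) x')"

definition saddle_points :: "'a set \<Rightarrow> 'b set \<Rightarrow> ('a \<times> 'b \<Rightarrow> real) \<Rightarrow> ('a \<times> 'b) set" where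
  "saddle_points X1 X2 f = {(x1, x2). x1 \<in> X1 \<and> x2 \<in> X2 \<and>
      (\<forall>y1\<in>X1. \<forall>y2\<in>X2. f (x1, y2) \<le> f (x1, x2) \<and> f (x1, x2) \<le> f (y1, x2))}"

definition is_SVI :: "'v::real_inner set \<Rightarrow> ('v \<Rightarrow> 'v) \<Rightarrow> 'v \<Rightarrow> bool" where
  "is_SVI X g xs \<longleftrightarrow> xs \<in> X \<and> (\<forall>x\<in>X. g xs \<bullet> (x - xs) \<ge> 0)"

definition is_MVI :: "'v::real_inner set \<Rightarrow> ('v \<Rightarrow> 'v) \<Rightarrow> 'v \<Rightarrow> bool" where
  "is_MVI X g xs \<longleftrightarrow> (\<forall>x\<in>X. g x \<bullet> (x - xs) \<ge> 0)"

definition coherent :: "'a::euclidean_space set \<Rightarrow> 'b::euclidean_space set \<Rightarrow> ('a \<times> 'b \<Rightarrow> real)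
    \<Rightarrow> ('a \<times> 'b \<Rightarrow> 'a \<times> 'b) \<Rightarrow> ('a \<times> 'b \<Rightarrow> 'a \<times> 'b \<Rightarrow> real) \<Rightarrow> bool" where
  "coherent X1 X2 f g D \<longleftrightarrow>
     (\<forall>xs. is_SVI (X1 \<times> X2) g xs \<longrightarrow> xs \<in> saddle_points X1 X2 f)
   \<and> (\<exists>p\<in>saddle_points X1 X2 f. is_MVI (X1 \<times> X2) g p)
   \<and> (\<exists>\<epsilon>0>0. \<forall>xs\<in>saddle_points X1 X2 f. \<forall>x\<in>X1 \<times> X2.
          D xs x \<le> \<epsilon>0 \<longrightarrow> g x \<bullet> (x - xs) \<ge> 0)"

end

theory Submission
  imports Defs
begin


lemma norm_zero: "is_norm N \<Longrightarrow> N 0 = 0"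
  unfolding is_norm_def by auto

lemma norm_minus: "is_norm N \<Longrightarrow> N (- x) = N x"
  unfolding is_norm_def by (metis abs_minus_cancel abs_one mult_1 scaleR_minus1_left)

lemma norm_commute: "is_norm N \<Longrightarrow> N (x - y) = N (y - x)"
  by (metis minus_diff_eq norm_minus)

lemma norm_sum: assumes "is_norm N" "finite A" shows "N (sum f A) \<le> (\<Sum>i\<in>A. N (f i))"
  using assms(2)
proof (induction A rule: finite_induct)
  case empty then show ?case using norm_zero[OF assms(1)] by simp
next
  case (insert a A)
  have "N (sum f (insert a A)) = N (f a + sum f A)" using insert by simp
  also have "\<dots> \<le> N (f a) + N (sum f A)" using assms(1) unfolding is_norm_def by blast
  finally show ?case using insert by simp
qed

lemma norm_upper:
  fixes N :: "'v::euclidean_space \<Rightarrow> real"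
  assumes "is_norm N" shows "\<exists>C\<ge>0. \<forall>x. N x \<le> C * norm x"
proof -
  define C where "C = (\<Sum>i\<in>Basis. N (i::'v))"
  have C0: "C \<ge> 0" unfolding C_def using assms unfolding is_norm_def by (simp add: sum_nonneg)
  have "N x \<le> C * norm x" for x
  proof -
    have "N x = N (\<Sum>b\<in>Basis. (x \<bullet> b) *\<^sub>R b)" by (simp add: euclidean_representation)
    also have "\<dots> \<le> (\<Sum>b\<in>Basis. N ((x \<bullet> b) *\<^sub>R b))" by (rule norm_sum[OF assms]) simp
    also have "\<dots> = (\<Sum>b\<in>Basis. \<bar>x \<bullet> b\<bar> * N b)" using assms unfolding is_norm_def by simp
    also have "\<dots> \<le> (\<Sum>b\<in>Basis. norm x * N b)"
      apply (rule sum_mono) apply (rule mult_right_mono)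
      using Basis_le_norm assms unfolding is_norm_def by auto
    also have "\<dots> = C * norm x" unfolding C_def by (simp add: sum_distrib_left mult.commute)
    finally show ?thesis .
  qed
  with C0 show ?thesis by blast
qed

lemma norm_equiv:
  fixes N :: "'v::euclidean_space \<Rightarrow> real"
  assumes N: "is_norm N" shows "\<exists>c>0. \<exists>C\<ge>0. \<forall>x. c * norm x \<le> N x \<and> N x \<le> C * norm x"
proof -
  obtain C where C: "C \<ge> 0" "\<And>x. N x \<le> C * norm x" using norm_upper[OF N] by blast
  have tri: "N (x + y) \<le> N x + N y" for x y using N unfolding is_norm_def by blast
  have "lipschitz_on C UNIV N"
  proof (rule lipschitz_onI)
    fix x y :: 'v
    have "N x \<le> N (x - y) + N y" using tri[of "x - y" y] by simp
    moreover have "N y \<le> N (y - x) + N x" using tri[of "y - x" x] by simp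
    moreover have "N (y - x) = N (x - y)" using norm_commute[OF N] by metis
    ultimately have "\<bar>N x - N y\<bar> \<le> N (x - y)" by linarith
    also have "\<dots> \<le> C * dist x y" using C(2) by (simp add: dist_norm)
    finally show "dist (N x) (N y) \<le> C * dist x y" by (simp add: dist_real_def)
  qed (rule C(1))
  then have cont: "continuous_on (sphere 0 1) N"
    using lipschitz_on_continuous_on continuous_on_subset by blast
  obtain b :: 'v where b: "b \<in> Basis" using nonempty_Basis by blast
  have "sphere (0::'v) 1 \<noteq> {}" using b by (metis empty_iff mem_sphere_0 norm_Basis)
  then obtain m where m: "m \<in> sphere 0 1" "\<And>y. y \<in> sphere 0 1 \<Longrightarrow> N m \<le> N y"
    using continuous_attains_inf[OF compact_sphere _ cont] by blast
  define c where "c = N m"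
  have "m \<noteq> 0" using m(1) by auto
  then have c: "c > 0" unfolding c_def using N unfolding is_norm_def by (metis order_le_less)
  have "c * norm x \<le> N x" for x
  proof (cases "x = 0")
    case True then show ?thesis using norm_zero[OF N] by simp
  next
    case False
    then have "x /\<^sub>R norm x \<in> sphere 0 1" by simp
    then have "c \<le> N (x /\<^sub>R norm x)" using m(2) c_def by blast
    also have "\<dots> = N x / norm x" using N unfolding is_norm_def by (simp add: divide_inverse_commute)
    finally show ?thesis using False by (simp add: field_simps)
  qed
  with c C show ?thesis by blast
qed

lemma dual_bound:
  fixes N :: "'v::euclidean_space \<Rightarrow> real"
  assumes N: "is_norm N" shows "y \<bullet> v \<le> dual_norm N y * N v"
proof -
  obtain c C where c: "c > 0" "\<And>x. c * norm x \<le> N x" using norm_equiv[OF N] by blast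
  have bdd: "bdd_above ((\<lambda>x. y \<bullet> x) ` {x. N x \<le> 1})"
  proof (rule bdd_aboveI2)
    fix x assume "x \<in> {x. N x \<le> 1}"
    then have "norm x \<le> 1 / c" using c by (smt (verit) mem_Collect_eq pos_le_divide_eq mult.commute)
    then have "norm y * norm x \<le> norm y * (1 / c)" by (intro mult_left_mono) simp_all
    moreover have "y \<bullet> x \<le> norm y * norm x" using norm_cauchy_schwarz by blast
    ultimately show "y \<bullet> x \<le> norm y / c" by simp
  qed
  show ?thesis
  proof (cases "v = 0")
    case True then show ?thesis using norm_zero[OF N] by simp
  next
    case False
    then have Nv: "N v > 0" using N unfolding is_norm_def by (metis order_le_less)
    define u where "u = v /\<^sub>R N v"
    have "N u = 1" unfolding u_def using N Nv False unfolding is_norm_def by (simp add: field_simps)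
    then have "y \<bullet> u \<le> dual_norm N y" unfolding dual_norm_def by (intro cSUP_upper[OF _ bdd]) simp
    moreover have "y \<bullet> v = N v * (y \<bullet> u)" unfolding u_def using Nv by simp
    ultimately show ?thesis using Nv by (simp add: mult.commute mult_left_mono)
  qed
qed



lemma seg_in:
  assumes "convex S" "a \<in> S" "b \<in> S" "t \<in> {0..1::real}"
  shows "b + t *\<^sub>R (a - b) \<in> S"
proof -
  have "b + t *\<^sub>R (a - b) = (1 - t) *\<^sub>R b + t *\<^sub>R a" by (simp add: algebra_simps)
  then show ?thesis using assms convexD[of S b a "1 - t" t] by auto
qed

lemma min_VI:
  fixes \<phi> :: "'v::real_normed_vector \<Rightarrow> real"
  assumes S: "convex S" and m: "m \<in> S" and p: "p \<in> S"
    and d: "(\<phi> has_derivative \<phi>') (at m within S)"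
    and mn: "\<And>z. z \<in> S \<Longrightarrow> \<phi> m \<le> \<phi> z"
  shows "\<phi>' (p - m) \<ge> 0"
proof -
  define ll where "ll t = m + t *\<^sub>R (p - m)" for t :: real
  have llS: "ll ` {0..1} \<subseteq> S" unfolding ll_def using seg_in[OF S p m] by auto
  have bl: "bounded_linear \<phi>'" using d has_derivative_bounded_linear by blast
  have dll: "(ll has_derivative (\<lambda>t. t *\<^sub>R (p - m))) (at 0 within {0..1})"
    unfolding ll_def by (auto intro!: derivative_eq_intros)
  have d2: "(\<phi> has_derivative \<phi>') (at (ll 0) within ll ` {0..1})"
    using has_derivative_subset[OF d llS] by (simp add: ll_def)
  have "((\<phi> \<circ> ll) has_derivative (\<phi>' \<circ> (\<lambda>t. t *\<^sub>R (p - m)))) (at 0 within {0..1})"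
    by (rule diff_chain_within[OF dll d2])
  moreover have "(\<phi>' \<circ> (\<lambda>t. t *\<^sub>R (p - m))) = (*) (\<phi>' (p - m))"
    using linear_scale[OF bounded_linear.linear[OF bl]] by (auto simp: fun_eq_iff mult.commute)
  ultimately have fd: "((\<phi> \<circ> ll) has_field_derivative \<phi>' (p - m)) (at 0 within {0..1})"
    by (simp add: has_field_derivative_def)
  then have lim: "((\<lambda>t. ((\<phi> \<circ> ll) t - (\<phi> \<circ> ll) 0) / (t - 0)) \<longlongrightarrow> \<phi>' (p - m)) (at_right 0)"
    using has_field_derivative_iff[THEN iffD1, OF fd] at_within_Icc_at_right[of "0::real" 1] by simp
  have ev: "eventually (\<lambda>t. 0 \<le> ((\<phi> \<circ> ll) t - (\<phi> \<circ> ll) 0) / (t - 0)) (at_right (0::real))"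
  proof (rule eventually_mono[OF eventually_at_right_real[of 0 1]])
    fix t :: real assume "t \<in> {0<..<1}"
    then have t: "0 < t" "t < 1" by auto
    then have "ll t \<in> S" using llS by auto
    then have "\<phi> (ll 0) \<le> \<phi> (ll t)" using mn ll_def m by simp
    then show "0 \<le> ((\<phi> \<circ> ll) t - (\<phi> \<circ> ll) 0) / (t - 0)" using t by simp
  qed simp
  show ?thesis by (rule tendsto_lowerbound[OF lim ev]) simp
qed

lemma breg_lower:
  fixes h :: "'v::real_inner \<Rightarrow> real"
  assumes S: "convex S" and a: "a \<in> S" and b: "b \<in> S"
    and hd: "\<And>x. x \<in> S \<Longrightarrow> (h has_derivative (\<lambda>v. dh x \<bullet> v)) (at x within S)"
    and N: "is_norm N"
    and strong: "\<And>x x'. x \<in> S \<Longrightarrow> x' \<in> S \<Longrightarrow> (dh x - dh x') \<bullet> (x - x') \<ge> K * (N (x - x'))\<^sup>2"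
  shows "bregman h dh a b \<ge> K / 2 * (N (a - b))\<^sup>2"
proof -
  define ll where "ll t = b + t *\<^sub>R (a - b)" for t :: real
  define c1 where "c1 = dh b \<bullet> (a - b)"
  define c2 where "c2 = (N (a - b))\<^sup>2"
  define \<psi> where "\<psi> t = h (ll t) - t * c1 - K / 2 * t ^ 2 * c2" for t
  have llS: "ll ` {0..1} \<subseteq> S" unfolding ll_def using seg_in[OF S a b] by auto
  have der: "(\<psi> has_derivative (\<lambda>s. s * (dh (ll t) \<bullet> (a - b) - c1 - K * t * c2))) (at t within {0..1})"
    if "0 \<le> t" "t \<le> 1" for t
  proof -
    have dll: "(ll has_derivative (\<lambda>s. s *\<^sub>R (a - b))) (at t within {0..1})"
      unfolding ll_def by (auto intro!: derivative_eq_intros)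
    have d1: "((\<lambda>t. h (ll t)) has_derivative (\<lambda>s. dh (ll t) \<bullet> (s *\<^sub>R (a - b)))) (at t within {0..1})"
      by (rule has_derivative_in_compose2[OF hd llS _ dll]) (use that in auto)
    have d2: "((\<lambda>t. t * c1) has_derivative (\<lambda>s. s * c1)) (at t within {0..1})"
      by (auto intro!: derivative_eq_intros)
    have d3: "((\<lambda>t. K / 2 * t ^ 2 * c2) has_derivative (\<lambda>s. s * (K * t * c2))) (at t within {0..1})"
      by (auto intro!: derivative_eq_intros simp: algebra_simps)
    show ?thesis unfolding \<psi>_def
      by (rule has_derivative_eq_rhs[OF has_derivative_diff[OF has_derivative_diff[OF d1 d2] d3]])
        (auto simp: fun_eq_iff algebra_simps)
  qed
  obtain \<xi> where \<xi>: "\<xi> \<in> {0<..<1}" and eq: "\<psi> 1 - \<psi> 0 = (1 - 0) * (dh (ll \<xi>) \<bullet> (a - b) - c1 - K * \<xi> * c2)"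
    using mvt_simple[of 0 1 \<psi>, OF _ der] by auto
  have "ll \<xi> \<in> S" using \<xi> llS by auto
  then have "(dh (ll \<xi>) - dh b) \<bullet> (ll \<xi> - b) \<ge> K * (N (ll \<xi> - b))\<^sup>2" using strong b by blast
  moreover have "ll \<xi> - b = \<xi> *\<^sub>R (a - b)" unfolding ll_def by simp
  moreover have "N (\<xi> *\<^sub>R (a - b)) = \<xi> * N (a - b)" using N \<xi> unfolding is_norm_def by auto
  ultimately have "\<xi> * ((dh (ll \<xi>) - dh b) \<bullet> (a - b)) \<ge> \<xi> * (K * \<xi> * c2)"
    unfolding c2_def by (simp add: power2_eq_square algebra_simps)
  then have "(dh (ll \<xi>) - dh b) \<bullet> (a - b) \<ge> K * \<xi> * c2" using \<xi> by (simp add: mult_le_cancel_left_pos)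
  then have "\<psi> 1 - \<psi> 0 \<ge> 0" using eq unfolding c1_def by (simp add: inner_diff_left)
  then show ?thesis unfolding \<psi>_def ll_def bregman_def c1_def c2_def by simp
qed



lemma prox_VI:
  fixes h :: "'v::euclidean_space \<Rightarrow> real"
  assumes S: "convex S" "compact S" and x: "x \<in> S"
    and hd: "\<And>x. x \<in> S \<Longrightarrow> (h has_derivative (\<lambda>v. dh x \<bullet> v)) (at x within S)"
    and N: "is_norm N" and K: "K > 0"
    and strong: "\<And>x x'. x \<in> S \<Longrightarrow> x' \<in> S \<Longrightarrow> (dh x - dh x') \<bullet> (x - x') \<ge> K * (N (x - x'))\<^sup>2"
  shows "prox S h dh x y \<in> S \<and> (\<forall>q\<in>S. (dh (prox S h dh x y) - dh x - y) \<bullet> (q - prox S h dh x y) \<ge> 0)"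
proof -
  define \<phi> where "\<phi> z = y \<bullet> (x - z) + bregman h dh z x" for z
  have hc: "continuous_on S h"
    using hd has_derivative_continuous continuous_on_eq_continuous_within by blast
  have \<phi>c: "continuous_on S \<phi>" unfolding \<phi>_def bregman_def
    by (intro continuous_intros hc)
  have VI: "(dh m - dh x - y) \<bullet> (q - m) \<ge> 0"
    if m: "m \<in> S" "\<And>z. z \<in> S \<Longrightarrow> \<phi> m \<le> \<phi> z" and q: "q \<in> S" for m q
  proof -
    have e: "\<phi> = (\<lambda>z. h z + ((y \<bullet> x - h x + dh x \<bullet> x) - (y + dh x) \<bullet> z))"
      unfolding \<phi>_def bregman_def by (auto simp: fun_eq_iff algebra_simps inner_diff_right inner_add_left)
    have lin: "((\<lambda>z. (y + dh x) \<bullet> z) has_derivative (\<lambda>v. (y + dh x) \<bullet> v)) (at m within S)"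
      by (rule has_derivative_inner_right[OF has_derivative_ident])
    have "(\<phi> has_derivative (\<lambda>v. dh m \<bullet> v + (0 - (y + dh x) \<bullet> v))) (at m within S)"
      unfolding e by (intro has_derivative_add hd[OF m(1)] has_derivative_diff has_derivative_const lin)
    then have "(\<phi> has_derivative (\<lambda>v. - (y \<bullet> v) + dh m \<bullet> v - dh x \<bullet> v)) (at m within S)"
      by (rule has_derivative_eq_rhs) (auto simp: fun_eq_iff inner_add_left)
    from min_VI[OF S(1) m(1) q this m(2)] show ?thesis by (simp add: inner_diff_left)
  qed
  obtain m where m: "m \<in> S" "\<And>z. z \<in> S \<Longrightarrow> \<phi> m \<le> \<phi> z"
    using continuous_attains_inf[OF S(2) _ \<phi>c] x by blast
  have am: "is_arg_min \<phi> (\<lambda>z. z \<in> S) m" using m unfolding is_arg_min_def by (auto simp: not_less)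
  have uniq: "m' = m" if "is_arg_min \<phi> (\<lambda>z. z \<in> S) m'" for m'
  proof -
    have m': "m' \<in> S" "\<And>z. z \<in> S \<Longrightarrow> \<phi> m' \<le> \<phi> z" using that unfolding is_arg_min_def by (auto simp: not_less)
    have "(dh m - dh x - y) \<bullet> (m' - m) \<ge> 0" by (rule VI[OF m m'(1)])
    moreover have "(dh m' - dh x - y) \<bullet> (m - m') \<ge> 0" by (rule VI[OF m' m(1)])
    ultimately have "(dh m' - dh m) \<bullet> (m' - m) \<le> 0"
      by (simp add: inner_diff_left inner_diff_right inner_commute algebra_simps)
    moreover have "(dh m' - dh m) \<bullet> (m' - m) \<ge> K * (N (m' - m))\<^sup>2" using strong m' m by blast
    moreover have "K * (N (m' - m))\<^sup>2 \<ge> 0" using K by simp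
    ultimately have "K * (N (m' - m))\<^sup>2 = 0" by linarith
    then have "N (m' - m) = 0" using K by simp
    then show ?thesis using N unfolding is_norm_def by simp
  qed
  have "prox S h dh x y = m" unfolding prox_def
    using the_equality[of "is_arg_min \<phi> (\<lambda>z. z \<in> S)" m, OF am uniq] unfolding \<phi>_def by simp
  then show ?thesis using m VI by auto
qed



lemma three_point: "bregman h dh p x = bregman h dh p xp + bregman h dh xp x + (dh xp - dh x) \<bullet> (p - xp)"
  unfolding bregman_def by (simp add: inner_diff_left inner_diff_right algebra_simps)

lemma sq_to_zero:
  fixes u v :: "nat \<Rightarrow> real"
  assumes "\<And>n. 0 \<le> u n" "\<And>n. (u n)\<^sup>2 \<le> v n" "v \<longlonglongrightarrow> 0"
  shows "u \<longlonglongrightarrow> 0"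
proof (rule tendsto_sandwich[of "\<lambda>n. 0" _ _ "\<lambda>n. sqrt (v n)"])
  show "\<forall>\<^sub>F n in sequentially. 0 \<le> u n" using assms by simp
  show "\<forall>\<^sub>F n in sequentially. u n \<le> sqrt (v n)"
    using assms(1,2) real_le_rsqrt by (simp add: real_le_rsqrt)
  show "(\<lambda>n. sqrt (v n)) \<longlonglongrightarrow> 0" using tendsto_real_sqrt[OF assms(3)] by simp
qed simp

lemma energy:
  fixes gX gY :: "'v::real_inner"
  assumes VIY: "(dh Y - dh X + \<gamma> *\<^sub>R gX) \<bullet> (Xp - Y) \<ge> 0"
    and VIX: "(dh Xp - dh X + \<gamma> *\<^sub>R gY) \<bullet> (p - Xp) \<ge> 0"
    and L1: "bregman h dh Xp Y \<ge> K / 2 * a\<^sup>2"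
    and L2: "bregman h dh Y X \<ge> K / 2 * b\<^sup>2"
    and lip: "(gX - gY) \<bullet> (Xp - Y) \<le> Lg * b * a"
    and a: "a \<ge> 0" and b: "b \<ge> 0" and g: "\<gamma> > 0" and Lg: "Lg \<ge> 0" and gL: "\<gamma> * Lg \<le> M"
  shows "bregman h dh p Xp \<le> bregman h dh p X - \<gamma> * (gY \<bullet> (Y - p)) - (K - M) / 2 * (a\<^sup>2 + b\<^sup>2)"
proof -
  have id1: "bregman h dh p X = bregman h dh p Xp + bregman h dh Xp X + (dh Xp - dh X) \<bullet> (p - Xp)"
    by (rule three_point)
  have id2: "bregman h dh Xp X = bregman h dh Xp Y + bregman h dh Y X + (dh Y - dh X) \<bullet> (Xp - Y)"
    by (rule three_point)
  have v1: "(dh Y - dh X) \<bullet> (Xp - Y) \<ge> - \<gamma> * (gX \<bullet> (Xp - Y))"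
    using VIY by (simp add: inner_add_left)
  have v2: "(dh Xp - dh X) \<bullet> (p - Xp) \<ge> - \<gamma> * (gY \<bullet> (p - Xp))"
    using VIX by (simp add: inner_add_left)
  have e: "- \<gamma> * (gX \<bullet> (Xp - Y)) - \<gamma> * (gY \<bullet> (p - Xp))
      = \<gamma> * (gY \<bullet> (Y - p)) - \<gamma> * ((gX - gY) \<bullet> (Xp - Y))"
    by (simp add: inner_diff_left inner_diff_right algebra_simps)
  have "\<gamma> * ((gX - gY) \<bullet> (Xp - Y)) \<le> \<gamma> * (Lg * b * a)" using lip g by simp
  also have "\<dots> \<le> \<gamma> * Lg * ((a\<^sup>2 + b\<^sup>2) / 2)"
  proof -
    have "b * a \<le> (a\<^sup>2 + b\<^sup>2) / 2" using sum_squares_ge_zero[of "a - b" 0]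
      by (simp add: power2_eq_square algebra_simps)
    then show ?thesis using g Lg by (simp add: mult_left_mono mult.assoc)
  qed
  also have "\<dots> \<le> M * ((a\<^sup>2 + b\<^sup>2) / 2)" using gL by (simp add: mult_right_mono)
  finally have "\<gamma> * ((gX - gY) \<bullet> (Xp - Y)) \<le> M * ((a\<^sup>2 + b\<^sup>2) / 2)" .
  moreover have "(K - M) / 2 * (a\<^sup>2 + b\<^sup>2) = K / 2 * a\<^sup>2 + K / 2 * b\<^sup>2 - M * ((a\<^sup>2 + b\<^sup>2) / 2)"
    by (simp add: field_simps)
  ultimately show ?thesis using id1 id2 v1 v2 e L1 L2 by linarith
qed



theorem theorem1:
  fixes X1 :: "'a::euclidean_space set" and X2 :: "'b::euclidean_space set"
    and N :: "'a \<times> 'b \<Rightarrow> real"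
    and f :: "'a \<times> 'b \<Rightarrow> real" and Df :: "'a \<times> 'b \<Rightarrow> 'a \<times> 'b"
    and g :: "'a \<times> 'b \<Rightarrow> 'a \<times> 'b"
    and h :: "'a \<times> 'b \<Rightarrow> real" and dh :: "'a \<times> 'b \<Rightarrow> 'a \<times> 'b"
    and K Lh Lg :: real and \<gamma> :: "nat \<Rightarrow> real"
    and X Y :: "nat \<Rightarrow> 'a \<times> 'b"
  assumes X1: "compact X1" "convex X1" and X2: "compact X2" "convex X2"
    and N: "is_norm N"
    and f_deriv: "\<And>x. x \<in> X1 \<times> X2 \<Longrightarrow> (f has_derivative (\<lambda>v. Df x \<bullet> v)) (at x within X1 \<times> X2)"
    and f_C1: "continuous_on (X1 \<times> X2) Df"
    and g_def: "\<And>x. g x = (fst (Df x), - snd (Df x))"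
    and h_deriv: "\<And>x. x \<in> X1 \<times> X2 \<Longrightarrow> (h has_derivative (\<lambda>v. dh x \<bullet> v)) (at x within X1 \<times> X2)"
    and K: "K > 0"
    and h_strong: "\<And>x x'. x \<in> X1 \<times> X2 \<Longrightarrow> x' \<in> X1 \<times> X2 \<Longrightarrow>
                    (dh x - dh x') \<bullet> (x - x') \<ge> K * (N (x - x'))\<^sup>2"
    and h_lip: "\<And>x x'. x \<in> X1 \<times> X2 \<Longrightarrow> x' \<in> X1 \<times> X2 \<Longrightarrow>
                    dual_norm N (dh x - dh x') \<le> Lh * N (x - x')"
    and reciprocity: "\<And>p xn. p \<in> X1 \<times> X2 \<Longrightarrow> (\<forall>n. xn n \<in> X1 \<times> X2) \<Longrightarrow> xn \<longlonglongrightarrow> p \<Longrightarrow>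
                    (\<lambda>n. bregman h dh p (xn n)) \<longlonglongrightarrow> 0"
    and coh: "coherent X1 X2 f g (bregman h dh)"
    and Lg: "Lg \<ge> 0"
    and g_lip: "\<And>x x'. x \<in> X1 \<times> X2 \<Longrightarrow> x' \<in> X1 \<times> X2 \<Longrightarrow>
                    dual_norm N (g x - g x') \<le> Lg * N (x - x')"
    and \<gamma>_pos: "\<And>n. \<gamma> n > 0"
    and \<gamma>_conv: "convergent \<gamma>" and \<gamma>_lim: "lim \<gamma> > 0"
    and \<gamma>_bdd: "bdd_above (range \<gamma>)" and \<gamma>_sup: "(SUP n. \<gamma> n) * Lg < K"
    and X0: "X 0 \<in> X1 \<times> X2"
    and Y_def: "\<And>n. Y n = prox (X1 \<times> X2) h dh (X n) (- (\<gamma> n *\<^sub>R g (X n)))"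
    and X_step: "\<And>n. X (Suc n) = prox (X1 \<times> X2) h dh (X n) (- (\<gamma> n *\<^sub>R g (Y n)))"
  shows "\<exists>xs\<in>saddle_points X1 X2 f. X \<longlonglongrightarrow> xs \<and>
           (\<exists>n0. \<forall>n\<ge>n0. bregman h dh xs (X (Suc n)) \<le> bregman h dh xs (X n))"
proof -
  define S where "S = X1 \<times> X2"
  have Sc: "compact S" unfolding S_def using X1 X2 compact_Times by blast
  have Sv: "convex S" unfolding S_def using X1 X2 convex_Times by blast
  have X0S: "X 0 \<in> S" using X0 S_def by simp
  have hd: "\<And>x. x \<in> S \<Longrightarrow> (h has_derivative (\<lambda>v. dh x \<bullet> v)) (at x within S)"
    using h_deriv S_def by simp
  have strong: "\<And>x x'. x \<in> S \<Longrightarrow> x' \<in> S \<Longrightarrow> (dh x - dh x') \<bullet> (x - x') \<ge> K * (N (x - x'))\<^sup>2"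
    using h_strong S_def by simp
  obtain c C where c: "c > 0" "C \<ge> 0" and cC: "\<And>x. c * norm x \<le> N x" "\<And>x. N x \<le> C * norm x"
    using norm_equiv[OF N] by blast
  have N0: "\<And>x. N x \<ge> 0" using N unfolding is_norm_def by blast
  have Nc: "\<And>x y. N (x - y) = N (y - x)" using norm_commute[OF N] by blast
  have Dlow: "\<And>a b. a \<in> S \<Longrightarrow> b \<in> S \<Longrightarrow> bregman h dh a b \<ge> K / 2 * (N (a - b))\<^sup>2"
    using breg_lower[OF Sv _ _ hd N strong] by blast
  have Dpos: "\<And>a b. a \<in> S \<Longrightarrow> b \<in> S \<Longrightarrow> bregman h dh a b \<ge> 0"
    using Dlow K by (smt (verit) divide_nonneg_pos mult_nonneg_nonneg zero_le_power2)
  have pr: "\<And>x y. x \<in> S \<Longrightarrow> prox S h dh x y \<in> S \<and>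
      (\<forall>q\<in>S. (dh (prox S h dh x y) - dh x - y) \<bullet> (q - prox S h dh x y) \<ge> 0)"
    using prox_VI[OF Sv Sc _ hd N K strong] by blast
  have Yd: "Y n = prox S h dh (X n) (- (\<gamma> n *\<^sub>R g (X n)))" for n using Y_def S_def by simp
  have Xd: "X (Suc n) = prox S h dh (X n) (- (\<gamma> n *\<^sub>R g (Y n)))" for n using X_step S_def by simp
  have XS: "X n \<in> S" for n
  proof (induction n)
    case 0 then show ?case by (rule X0S)
  next
    case (Suc n) then show ?case using pr Xd by simp
  qed
  have YS: "Y n \<in> S" for n using pr[OF XS[of n]] Yd by simp
  have VIY: "(dh (Y n) - dh (X n) + \<gamma> n *\<^sub>R g (X n)) \<bullet> (q - Y n) \<ge> 0" if "q \<in> S" for n q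
  proof -
    have "\<forall>q\<in>S. (dh (Y n) - dh (X n) - (- (\<gamma> n *\<^sub>R g (X n)))) \<bullet> (q - Y n) \<ge> 0"
      using pr[OF XS[of n], of "- (\<gamma> n *\<^sub>R g (X n))"] unfolding Yd[symmetric] by blast
    then show ?thesis using that by simp
  qed
  have VIX: "(dh (X (Suc n)) - dh (X n) + \<gamma> n *\<^sub>R g (Y n)) \<bullet> (q - X (Suc n)) \<ge> 0" if "q \<in> S" for n q
  proof -
    have "\<forall>q\<in>S. (dh (X (Suc n)) - dh (X n) - (- (\<gamma> n *\<^sub>R g (Y n)))) \<bullet> (q - X (Suc n)) \<ge> 0"
      using pr[OF XS[of n], of "- (\<gamma> n *\<^sub>R g (Y n))"] unfolding Xd[symmetric] by blast
    then show ?thesis using that by simp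
  qed
  define \<Gamma> where "\<Gamma> = (SUP n. \<gamma> n)"
  have g\<Gamma>: "\<gamma> n \<le> \<Gamma>" for n unfolding \<Gamma>_def using \<gamma>_bdd by (simp add: cSUP_upper)
  define \<delta> where "\<delta> = (K - \<Gamma> * Lg) / 2"
  have \<delta>: "\<delta> > 0" unfolding \<delta>_def using \<gamma>_sup \<Gamma>_def by simp
  have glip: "(g (X n) - g (Y n)) \<bullet> (X (Suc n) - Y n) \<le> Lg * N (Y n - X n) * N (X (Suc n) - Y n)" for n
  proof -
    have "(g (X n) - g (Y n)) \<bullet> (X (Suc n) - Y n) \<le> dual_norm N (g (X n) - g (Y n)) * N (X (Suc n) - Y n)"
      by (rule dual_bound[OF N])
    also have "\<dots> \<le> Lg * N (X n - Y n) * N (X (Suc n) - Y n)"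
      using g_lip[of "X n" "Y n"] XS YS S_def N0 by (simp add: mult_right_mono)
    finally show ?thesis using Nc by metis
  qed
  have energy_n: "bregman h dh p (X (Suc n)) \<le> bregman h dh p (X n) - \<gamma> n * (g (Y n) \<bullet> (Y n - p))
      - \<delta> * ((N (X (Suc n) - Y n))\<^sup>2 + (N (Y n - X n))\<^sup>2)" if p: "p \<in> S" for p n
  proof -
    have "\<gamma> n * Lg \<le> \<Gamma> * Lg" using g\<Gamma> Lg by (simp add: mult_right_mono)
    from energy[OF VIY[OF XS[of "Suc n"]] VIX[OF p] Dlow[OF XS[of "Suc n"] YS[of n]] Dlow[OF YS[of n] XS[of n]]
        glip N0 N0 \<gamma>_pos Lg this]
    show ?thesis unfolding \<delta>_def by simp
  qed
  obtain p0 where p0: "p0 \<in> saddle_points X1 X2 f" "is_MVI (X1 \<times> X2) g p0"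
    using coh unfolding coherent_def by blast
  have p0S: "p0 \<in> S" using p0(1) unfolding saddle_points_def S_def by auto
  define d where "d n = bregman h dh p0 (X n)" for n
  have dstep: "d (Suc n) \<le> d n - \<delta> * (N (Y n - X n))\<^sup>2" for n
  proof -
    have "g (Y n) \<bullet> (Y n - p0) \<ge> 0" using p0(2) YS unfolding is_MVI_def S_def by blast
    then have "\<gamma> n * (g (Y n) \<bullet> (Y n - p0)) \<ge> 0" using \<gamma>_pos[of n] by (simp add: mult_nonneg_nonneg)
    moreover have "\<delta> * (N (X (Suc n) - Y n))\<^sup>2 \<ge> 0" using \<delta> by simp
    ultimately show ?thesis using energy_n[OF p0S, of n] unfolding d_def by (simp add: algebra_simps)
  qed
  have dpos: "d n \<ge> 0" for n unfolding d_def using Dpos p0S XS by blast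
  have ddec: "decseq d"
    using dstep \<delta> by (intro decseq_SucI) (smt (verit) mult_nonneg_nonneg zero_le_power2)
  obtain Ld where Ld: "d \<longlonglongrightarrow> Ld" using decseq_convergent[OF ddec, of 0] dpos by blast
  have "(\<lambda>n. (d n - d (Suc n)) / \<delta>) \<longlonglongrightarrow> (Ld - Ld) / \<delta>"
    by (intro tendsto_intros Ld LIMSEQ_Suc[OF Ld]) (use \<delta> in simp)
  then have dd0: "(\<lambda>n. (d n - d (Suc n)) / \<delta>) \<longlonglongrightarrow> 0" by simp
  have NYX: "(\<lambda>n. N (Y n - X n)) \<longlonglongrightarrow> 0"
  proof (rule sq_to_zero[OF N0 _ dd0])
    fix n show "(N (Y n - X n))\<^sup>2 \<le> (d n - d (Suc n)) / \<delta>"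
      using dstep[of n] \<delta> by (simp add: field_simps)
  qed
  have YX0: "(\<lambda>n. Y n - X n) \<longlonglongrightarrow> 0"
  proof (rule Lim_null_comparison[of _ "\<lambda>n. N (Y n - X n) / c"])
    show "\<forall>\<^sub>F n in sequentially. norm (Y n - X n) \<le> N (Y n - X n) / c"
      using cC(1) c by (simp add: field_simps mult.commute)
    show "(\<lambda>n. N (Y n - X n) / c) \<longlonglongrightarrow> 0" using tendsto_divide_zero[OF NYX, of c] by simp
  qed
  have dhlip: "norm (dh x - dh x') \<le> \<bar>Lh\<bar> * C * N (x - x')" if "x \<in> S" "x' \<in> S" for x x'
  proof (cases "dh x - dh x' = 0")
    case True then show ?thesis using N0 c by simp
  next
    case False
    define w where "w = dh x - dh x'"
    have "(norm w)\<^sup>2 = w \<bullet> w" by (simp add: power2_norm_eq_inner)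
    also have "\<dots> \<le> dual_norm N w * N w" by (rule dual_bound[OF N])
    also have "\<dots> \<le> Lh * N (x - x') * N w"
      using h_lip[of x x'] that S_def N0 w_def by (simp add: mult_right_mono)
    also have "\<dots> \<le> \<bar>Lh\<bar> * N (x - x') * (C * norm w)"
      using N0 cC(2)[of w] by (smt (verit) abs_ge_self mult_left_mono mult_nonneg_nonneg mult_right_mono abs_ge_zero)
    finally have "norm w * norm w \<le> (\<bar>Lh\<bar> * C * N (x - x')) * norm w"
      by (simp add: power2_eq_square algebra_simps)
    moreover have "norm w > 0" using False w_def by simp
    ultimately show ?thesis unfolding w_def by simp
  qed
  have dhc: "continuous_on S dh"
  proof (rule lipschitz_on_continuous_on)
    show "(\<bar>Lh\<bar> * C * C)-lipschitz_on S dh"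
    proof (rule lipschitz_onI)
      fix x y assume "x \<in> S" "y \<in> S"
      then have "norm (dh x - dh y) \<le> \<bar>Lh\<bar> * C * N (x - y)" by (rule dhlip)
      also have "\<dots> \<le> \<bar>Lh\<bar> * C * (C * norm (x - y))"
        using cC(2) c by (simp add: mult_left_mono)
      finally show "dist (dh x) (dh y) \<le> \<bar>Lh\<bar> * C * C * dist x y" by (simp add: dist_norm mult.assoc)
    qed (use c in simp)
  qed
  have gfun: "g = (\<lambda>x. (fst (Df x), - snd (Df x)))" using g_def by auto
  have gc: "continuous_on S g" unfolding gfun S_def by (intro continuous_intros f_C1)
  obtain l r where lS: "l \<in> S" and r: "strict_mono r" and Xr: "(X \<circ> r) \<longlonglongrightarrow> l"
    using seq_compactE[OF compact_imp_seq_compact[OF Sc], of X] XS by blast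
  have Yr: "(Y \<circ> r) \<longlonglongrightarrow> l"
  proof -
    have "(\<lambda>k. (X \<circ> r) k + ((\<lambda>n. Y n - X n) \<circ> r) k) \<longlonglongrightarrow> l + 0"
      by (intro tendsto_add Xr LIMSEQ_subseq_LIMSEQ[OF YX0 r])
    then show ?thesis by (simp add: comp_def)
  qed
  have \<gamma>r: "(\<gamma> \<circ> r) \<longlonglongrightarrow> lim \<gamma>"
    using LIMSEQ_subseq_LIMSEQ[OF \<gamma>_conv[unfolded convergent_LIMSEQ_iff] r] .
  have SVI: "g l \<bullet> (q - l) \<ge> 0" if q: "q \<in> S" for q
  proof -
    have c1: "(\<lambda>k. dh (Y (r k))) \<longlonglongrightarrow> dh l"
      using continuous_on_tendsto_compose[OF dhc Yr lS] YS by (simp add: comp_def)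
    have c2: "(\<lambda>k. dh (X (r k))) \<longlonglongrightarrow> dh l"
      using continuous_on_tendsto_compose[OF dhc Xr lS] XS by (simp add: comp_def)
    have c3: "(\<lambda>k. g (X (r k))) \<longlonglongrightarrow> g l"
      using continuous_on_tendsto_compose[OF gc Xr lS] XS by (simp add: comp_def)
    have "(\<lambda>k. (dh (Y (r k)) - dh (X (r k)) + \<gamma> (r k) *\<^sub>R g (X (r k))) \<bullet> (q - Y (r k)))
        \<longlonglongrightarrow> (dh l - dh l + lim \<gamma> *\<^sub>R g l) \<bullet> (q - l)"
      using c1 c2 c3 \<gamma>r Yr by (intro tendsto_intros) (auto simp: comp_def)
    then have "0 \<le> (dh l - dh l + lim \<gamma> *\<^sub>R g l) \<bullet> (q - l)"
      by (rule LIMSEQ_le_const) (use VIY[OF q] in blast)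
    then have "0 \<le> lim \<gamma> * (g l \<bullet> (q - l))" by simp
    then show ?thesis using \<gamma>_lim by (simp add: zero_le_mult_iff)
  qed
  have lsp: "l \<in> saddle_points X1 X2 f"
    using coh SVI lS unfolding coherent_def is_SVI_def S_def by blast
  obtain \<epsilon>0 where \<epsilon>0: "\<epsilon>0 > 0" and loc: "\<And>x. x \<in> S \<Longrightarrow> bregman h dh l x \<le> \<epsilon>0 \<Longrightarrow> g x \<bullet> (x - l) \<ge> 0"
    using coh lsp unfolding coherent_def S_def by blast
  obtain B where B: "B > 0" "\<And>x. x \<in> S \<Longrightarrow> norm x \<le> B"
    using compact_imp_bounded[OF Sc] unfolding bounded_pos by blast
  define e where "e n = norm (dh (Y n) - dh (X n)) * (2 * B)" for n
  have DY: "bregman h dh l (Y n) \<le> bregman h dh l (X n) + e n" for n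
  proof -
    have tp: "bregman h dh l (X n) = bregman h dh l (Y n) + bregman h dh (Y n) (X n) + (dh (Y n) - dh (X n)) \<bullet> (l - Y n)"
      by (rule three_point)
    have "- ((dh (Y n) - dh (X n)) \<bullet> (l - Y n)) \<le> norm (dh (Y n) - dh (X n)) * norm (l - Y n)"
      by (metis Cauchy_Schwarz_ineq2 abs_le_D2 )
    also have "\<dots> \<le> norm (dh (Y n) - dh (X n)) * (2 * B)"
    proof (rule mult_left_mono)
      have "norm (l - Y n) \<le> norm l + norm (Y n)" by (rule norm_triangle_ineq4)
      then show "norm (l - Y n) \<le> 2 * B" using B(2)[OF lS] B(2)[OF YS[of n]] by simp
    qed simp
    finally show ?thesis using tp Dpos[OF YS[of n] XS[of n]] unfolding e_def by linarith
  qed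
  have e0: "e \<longlonglongrightarrow> 0"
  proof -
    have "(\<lambda>n. norm (dh (Y n) - dh (X n))) \<longlonglongrightarrow> 0"
    proof (rule tendsto_sandwich[of "\<lambda>n. 0" _ _ "\<lambda>n. \<bar>Lh\<bar> * C * N (Y n - X n)"])
      show "\<forall>\<^sub>F n in sequentially. norm (dh (Y n) - dh (X n)) \<le> \<bar>Lh\<bar> * C * N (Y n - X n)"
        using dhlip YS XS by simp
      show "(\<lambda>n. \<bar>Lh\<bar> * C * N (Y n - X n)) \<longlonglongrightarrow> 0"
        using tendsto_mult_right_zero[OF NYX, of "\<bar>Lh\<bar> * C"] by simp
    qed simp_all
    then show ?thesis unfolding e_def using tendsto_mult_left_zero by blast
  qed
  obtain m where m: "\<And>n. n \<ge> m \<Longrightarrow> e n < \<epsilon>0 / 2"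
    using order_tendstoD(2)[OF e0, of "\<epsilon>0 / 2"] \<epsilon>0 unfolding eventually_sequentially by auto
  have Dr: "(\<lambda>k. bregman h dh l (X (r k))) \<longlonglongrightarrow> 0"
    using reciprocity[of l "X \<circ> r"] lS XS Xr S_def by (simp add: comp_def)
  obtain m2 where m2: "\<And>k. k \<ge> m2 \<Longrightarrow> bregman h dh l (X (r k)) < \<epsilon>0 / 2"
    using order_tendstoD(2)[OF Dr, of "\<epsilon>0 / 2"] \<epsilon>0 unfolding eventually_sequentially by auto
  define k0 where "k0 = max m m2"
  define n0 where "n0 = r k0"
  have n0m: "n0 \<ge> m" unfolding n0_def k0_def using seq_suble[OF r, of "max m m2"] by simp
  have Dn0: "bregman h dh l (X n0) < \<epsilon>0 / 2" unfolding n0_def k0_def using m2 by simp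
  define a where "a n = bregman h dh l (X n)" for n
  have step: "a (Suc n) \<le> a n" if "n \<ge> m" "a n < \<epsilon>0 / 2" for n
  proof -
    have "bregman h dh l (Y n) \<le> \<epsilon>0" using DY[of n] m[OF that(1)] that(2) unfolding a_def by simp
    then have "g (Y n) \<bullet> (Y n - l) \<ge> 0" using loc YS by blast
    then have "\<gamma> n * (g (Y n) \<bullet> (Y n - l)) \<ge> 0" using \<gamma>_pos[of n] by (simp add: mult_nonneg_nonneg)
    moreover have "\<delta> * ((N (X (Suc n) - Y n))\<^sup>2 + (N (Y n - X n))\<^sup>2) \<ge> 0" using \<delta> by simp
    ultimately show ?thesis using energy_n[OF lS, of n] unfolding a_def by linarith
  qed
  have inv: "a (n0 + j) \<le> a n0" for j
  proof (induction j)
    case 0 then show ?case by simp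
  next
    case (Suc j)
    have "n0 + j \<ge> m" using n0m by linarith
    moreover have "a (n0 + j) < \<epsilon>0 / 2" using Suc.IH Dn0 unfolding a_def by linarith
    ultimately have "a (Suc (n0 + j)) \<le> a (n0 + j)" by (rule step)
    then show ?case using Suc.IH by simp
  qed
  have mono: "a (Suc n) \<le> a n" if "n \<ge> n0" for n
  proof -
    define j where "j = n - n0"
    have j: "n = n0 + j" unfolding j_def using that by simp
    have "n \<ge> m" using n0m that by linarith
    moreover have "a n < \<epsilon>0 / 2"
    proof -
      have "a n \<le> a n0" using inv[of j] unfolding j[symmetric] .
      then show ?thesis using Dn0 unfolding a_def by linarith
    qed
    ultimately show ?thesis by (rule step)
  qed
  have amono: "a j \<le> a i" if "n0 \<le> i" "i \<le> j" for i j
  proof -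
    have ms: "a (n0 + Suc t) \<le> a (n0 + t)" for t using mono[of "n0 + t"] by simp
    have "i - n0 \<le> j - n0" using that by linarith
    then have "a (n0 + (j - n0)) \<le> a (n0 + (i - n0))"
      by (rule lift_Suc_antimono_le[of "\<lambda>t. a (n0 + t)", OF ms])
    moreover have "n0 + (j - n0) = j" "n0 + (i - n0) = i" using that by linarith+
    ultimately show ?thesis by simp
  qed
  have a0: "a \<longlonglongrightarrow> 0"
  proof (rule LIMSEQ_I)
    fix \<epsilon> :: real assume "\<epsilon> > 0"
    then obtain m3 where m3: "\<And>k. k \<ge> m3 \<Longrightarrow> a (r k) < \<epsilon>"
      using order_tendstoD(2)[OF Dr, of \<epsilon>] unfolding eventually_sequentially a_def by auto
    define k1 where "k1 = max m3 n0"
    have rk1: "r k1 \<ge> n0" using seq_suble[OF r, of k1] unfolding k1_def by simp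
    show "\<exists>no. \<forall>n\<ge>no. norm (a n - 0) < \<epsilon>"
    proof (intro exI allI impI)
      fix n assume "n \<ge> r k1"
      then have "a n \<le> a (r k1)" using amono rk1 by blast
      moreover have "a (r k1) < \<epsilon>" using m3 unfolding k1_def by simp
      moreover have "a n \<ge> 0" unfolding a_def using Dpos lS XS by blast
      ultimately show "norm (a n - 0) < \<epsilon>" by simp
    qed
  qed
  have "(\<lambda>n. norm (X n - l)) \<longlonglongrightarrow> 0"
  proof (rule sq_to_zero[of _ "\<lambda>n. a n * (2 / (K * c\<^sup>2))"])
    fix n
    have "(c * norm (X n - l))\<^sup>2 \<le> (N (l - X n))\<^sup>2"
      using cC(1)[of "X n - l"] c Nc[of "X n" l] by (simp add: power_mono)
    also have "\<dots> \<le> a n * (2 / K)" using Dlow[OF lS XS[of n]] K unfolding a_def by (simp add: field_simps)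
    finally show "(norm (X n - l))\<^sup>2 \<le> a n * (2 / (K * c\<^sup>2))"
      using c K by (simp add: field_simps power_mult_distrib)
  next
    show "(\<lambda>n. a n * (2 / (K * c\<^sup>2))) \<longlonglongrightarrow> 0" by (rule tendsto_mult_left_zero[OF a0])
  qed simp
  then have "(\<lambda>n. X n - l) \<longlonglongrightarrow> 0" using tendsto_norm_zero_iff[of "\<lambda>n. X n - l"] by simp
  then have "X \<longlonglongrightarrow> l" using Lim_null[of X l sequentially] by simp
  moreover have "\<forall>n\<ge>n0. bregman h dh l (X (Suc n)) \<le> bregman h dh l (X n)" using mono unfolding a_def by blast
  ultimately show ?thesis using lsp by blast
qed

end
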